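(* Let $n=1$, $d=2$, $u_1$ a positive integer and $u_2=1$, and suppose the constants are chosen so that the point $V_2=(\lambda^{(1)}_2,\lambda^{(c)}_2)$ lies in the interior of the solid cone $K_1=\{(a,b)\in\mathbb R\times\mathbb C: a-\lambda^{(1)}_1/u_1\geqslant|b-\lambda^{(c)}_1/u_1|\}$. Then $N$ acts freely on $\mu^{-1}(0)$, condition (S) holds, so $M=\mu^{-1}(0)/N$ is a smooth $4$-manifold, and the induced hypersymplectic structure on $M$ is non-degenerate everywhere if and only if $u_1=1$.
   Context: Setting: $\mathbb C^{2,2}=\mathbb C^2\times\mathbb C^2$ with coordinates $(z,w)$, $g=\mathrm{Re}\sum_k(dz_k\,d\bar z_k-dw_k\,d\bar w_k)$, $I(z,w)=(iz,-iw)$, $S(z,w)=(w,z)$, $T=IS$, $\omega_A(Y,Z)=g(Y,AZ)$; $\mathbb T^2$ acts by $(z_k,w_k)\mapsto(e^{i\theta_k}z_k,e^{i\theta_k}w_k)$. With $u_1,u_2\in\mathbb Z$, $\beta\colon\mathbb R^2\to\mathbb R$, $e_k\mapsto u_k$, $\mathfrak n=\ker\beta$ with inclusion $\iota$, and $N\subset\mathbb T^2$ the kernel of the induced homomorphism $\mathbb T^2\to\mathbb T^1$. Fix real $\lambda^{(j)}_k$, $\lambda^{(c)}_k=\lambda^{(2)}_k+i\lambda^{(3)}_k$; $\mu_I(z,w)=\sum_k(\tfrac12(|z_k|^2+|w_k|^2)+\lambda^{(1)}_k)\iota^*e_k$, $(\mu_S+i\mu_T)(z,w)=\sum_k(iz_k\bar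 w_k+\lambda^{(c)}_k)\iota^*e_k$ (identifying $\mathbb R^2$ with its dual). Condition (S): at no $p\in\mu^{-1}(0)$ is there nonzero $(X_1,X_2,X_3)\in\mathfrak n^3$ with $(IX_1+SX_2+TX_3)_p=0$. The induced forms $\omega'_A$ on $M$ satisfy $\pi^*\omega'_A=\omega_A|_{\mu^{-1}(0)}$; non-degeneracy means all three are non-degenerate at every point. *)

theory Defs
  imports "HOL-Analysis.Analysis"
begin

text \<open>Points (and tangent vectors) of C^{2,2} = C^2 x C^2, written ((z1,z2),(w1,w2)).
  The torus T^2 and its Lie algebra R^2 are represented by angle pairs in real x real.\<close>

type_synonym pt = "(complex \<times> complex) \<times> (complex \<times> complex)"

definition zz1 :: "pt \<Rightarrow> complex" where "zz1 p = fst (fst p)"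
definition zz2 :: "pt \<Rightarrow> complex" where "zz2 p = snd (fst p)"
definition ww1 :: "pt \<Rightarrow> complex" where "ww1 p = fst (snd p)"
definition ww2 :: "pt \<Rightarrow> complex" where "ww2 p = snd (snd p)"

definition hs_g :: "pt \<Rightarrow> pt \<Rightarrow> real" where
  "hs_g Y Z = Re (zz1 Y * cnj (zz1 Z) + zz2 Y * cnj (zz2 Z)
                 - ww1 Y * cnj (ww1 Z) - ww2 Y * cnj (ww2 Z))"

definition I_op :: "pt \<Rightarrow> pt" where
  "I_op p = ((\<i> * zz1 p, \<i> * zz2 p), (- \<i> * ww1 p, - \<i> * ww2 p))"

definition S_op :: "pt \<Rightarrow> pt" where
  "S_op p = ((ww1 p, ww2 p), (zz1 p, zz2 p))"

definition T_op :: "pt \<Rightarrow> pt" where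
  "T_op p = I_op (S_op p)"

definition omega :: "(pt \<Rightarrow> pt) \<Rightarrow> pt \<Rightarrow> pt \<Rightarrow> real" where
  "omega A Y Z = hs_g Y (A Z)"

definition torus_act :: "real \<times> real \<Rightarrow> pt \<Rightarrow> pt" where
  "torus_act \<theta> p = ((cis (fst \<theta>) * zz1 p, cis (snd \<theta>) * zz2 p),
                      (cis (fst \<theta>) * ww1 p, cis (snd \<theta>) * ww2 p))"

text \<open>Fundamental vector field X_p = d/dt torus_act (t X) p at t = 0.\<close>
definition fund :: "real \<times> real \<Rightarrow> pt \<Rightarrow> pt" where
  "fund X p = ((\<i> * of_real (fst X) * zz1 p, \<i> * of_real (snd X) * zz2 p),
               (\<i> * of_real (fst X) * ww1 p, \<i> * of_real (snd X) * ww2 p))"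

definition beta :: "int \<times> int \<Rightarrow> real \<times> real \<Rightarrow> real" where
  "beta u X = of_int (fst u) * fst X + of_int (snd u) * snd X"

definition nlie :: "int \<times> int \<Rightarrow> (real \<times> real) set" where
  "nlie u = {X. beta u X = 0}"

text \<open>N = kernel of the induced homomorphism T^2 -> T^1, (theta1,theta2) |-> u1 theta1 + u2 theta2,
  as a set of angle representatives.\<close>
definition Ngrp :: "int \<times> int \<Rightarrow> (real \<times> real) set" where
  "Ngrp u = {\<theta>. \<exists>m::int. of_int (fst u) * fst \<theta> + of_int (snd u) * snd \<theta> = 2 * pi * of_int m}"

definition torus_identity :: "real \<times> real \<Rightarrow> bool" where
  "torus_identity \<theta> \<longleftrightarrow> (\<exists>m1 m2::int. fst \<theta> = 2 * pi * of_int m1 \<and> snd \<theta> = 2 * pi * of_int m2)"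

text \<open>Pairings of mu_I(p) and (mu_S + i mu_T)(p) (elements of n^*) with X in n.\<close>
definition muI :: "real \<times> real \<Rightarrow> pt \<Rightarrow> real \<times> real \<Rightarrow> real" where
  "muI lam1 p X =
     ((1/2) * ((cmod (zz1 p))\<^sup>2 + (cmod (ww1 p))\<^sup>2) + fst lam1) * fst X
   + ((1/2) * ((cmod (zz2 p))\<^sup>2 + (cmod (ww2 p))\<^sup>2) + snd lam1) * snd X"

definition muC :: "complex \<times> complex \<Rightarrow> pt \<Rightarrow> real \<times> real \<Rightarrow> complex" where
  "muC lamc p X =
     (\<i> * zz1 p * cnj (ww1 p) + fst lamc) * of_real (fst X)
   + (\<i> * zz2 p * cnj (ww2 p) + snd lamc) * of_real (snd X)"

definition mu_zero :: "int \<times> int \<Rightarrow> real \<times> real \<Rightarrow> complex \<times> complex \<Rightarrow> pt set" where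
  "mu_zero u lam1 lamc = {p. \<forall>X \<in> nlie u. muI lam1 p X = 0 \<and> muC lamc p X = 0}"

definition N_acts_freely :: "int \<times> int \<Rightarrow> real \<times> real \<Rightarrow> complex \<times> complex \<Rightarrow> bool" where
  "N_acts_freely u lam1 lamc \<longleftrightarrow>
     (\<forall>p \<in> mu_zero u lam1 lamc. \<forall>\<theta> \<in> Ngrp u. torus_act \<theta> p = p \<longrightarrow> torus_identity \<theta>)"

definition condS :: "int \<times> int \<Rightarrow> real \<times> real \<Rightarrow> complex \<times> complex \<Rightarrow> bool" where
  "condS u lam1 lamc \<longleftrightarrow>
     (\<forall>p \<in> mu_zero u lam1 lamc. \<forall>X1 \<in> nlie u. \<forall>X2 \<in> nlie u. \<forall>X3 \<in> nlie u.
        I_op (fund X1 p) + S_op (fund X2 p) + T_op (fund X3 p) = 0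
        \<longrightarrow> X1 = 0 \<and> X2 = 0 \<and> X3 = 0)"

text \<open>Tangent space of mu^{-1}(0) at p, as the kernel of d mu_p (the level is regular by (S)).\<close>
definition level_tangent :: "int \<times> int \<Rightarrow> real \<times> real \<Rightarrow> complex \<times> complex \<Rightarrow> pt \<Rightarrow> pt set" where
  "level_tangent u lam1 lamc p =
     {v. \<forall>X \<in> nlie u. frechet_derivative (\<lambda>q. muI lam1 q X) (at p) v = 0
                     \<and> frechet_derivative (\<lambda>q. muC lamc q X) (at p) v = 0}"

text \<open>omega'_A is non-degenerate at pi(p) iff the radical of omega_A restricted to
  T_p mu^{-1}(0) lies in ker d pi_p = tangent space {X_p | X in n} of the N-orbit.\<close>
definition induced_nondeg_at ::
  "int \<times> int \<Rightarrow> real \<times> real \<Rightarrow> complex \<times> complex \<Rightarrow> (pt \<Rightarrow> pt) \<Rightarrow> pt \<Rightarrow> bool" where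
  "induced_nondeg_at u lam1 lamc A p \<longleftrightarrow>
     (\<forall>v \<in> level_tangent u lam1 lamc p.
        (\<forall>w \<in> level_tangent u lam1 lamc p. omega A v w = 0)
        \<longrightarrow> (\<exists>X \<in> nlie u. v = fund X p))"

definition induced_structure_nondeg :: "int \<times> int \<Rightarrow> real \<times> real \<Rightarrow> complex \<times> complex \<Rightarrow> bool" where
  "induced_structure_nondeg u lam1 lamc \<longleftrightarrow>
     (\<forall>A \<in> {I_op, S_op, T_op}. \<forall>p \<in> mu_zero u lam1 lamc. induced_nondeg_at u lam1 lamc A p)"

definition coneK1 :: "real \<Rightarrow> real \<times> real \<Rightarrow> complex \<times> complex \<Rightarrow> (real \<times> complex) set" where
  "coneK1 u1 lam1 lamc =
     {(a, b). a - fst lam1 / u1 \<ge> cmod (b - fst lamc / of_real u1)}"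

end

theory Submission
  imports Defs
begin


lemma zz_simps[simp]: "zz1 ((a,b),(c,d)) = a" "zz2 ((a,b),(c,d)) = b" "ww1 ((a,b),(c,d)) = c" "ww2 ((a,b),(c,d)) = d"
  by (simp_all add: zz1_def zz2_def ww1_def ww2_def)

lemma cmod_sq_deriv:
  assumes "bounded_linear f"
  shows "((\<lambda>q. (cmod (f q))\<^sup>2) has_derivative (\<lambda>v. 2 * Re (f q * cnj (f v)))) (at q)"
proof -
  have d: "(f has_derivative f) (at q)" using assms bounded_linear.has_derivative[OF assms has_derivative_ident] by simp
  have "((\<lambda>q. f q \<bullet> f q) has_derivative (\<lambda>h. f q \<bullet> f h + f h \<bullet> f q)) (at q)"
    by (rule has_derivative_inner[OF d d])
  moreover have "(\<lambda>q. (cmod (f q))\<^sup>2) = (\<lambda>q. f q \<bullet> f q)" by (simp add: power2_norm_eq_inner)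
  moreover have "(\<lambda>h. f q \<bullet> f h + f h \<bullet> f q) = (\<lambda>v. 2 * Re (f q * cnj (f v)))"
    by (auto simp: inner_complex_def algebra_simps)
  ultimately show ?thesis by simp
qed

lemma bl_zz: "bounded_linear zz1" "bounded_linear zz2" "bounded_linear ww1" "bounded_linear ww2"
  unfolding zz1_def zz2_def ww1_def ww2_def
  by (auto intro!: bounded_linear_compose[OF bounded_linear_fst] bounded_linear_compose[OF bounded_linear_snd] bounded_linear_fst bounded_linear_snd simp: o_def)


lemma hd_zz: "(zz1 has_derivative zz1) F" "(zz2 has_derivative zz2) F" "(ww1 has_derivative ww1) F" "(ww2 has_derivative ww2) F"
  using bl_zz by (auto intro: bounded_linear_imp_has_derivative)

lemma muI_deriv:
  "((\<lambda>q. muI lam1 q X) has_derivative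
     (\<lambda>v. (Re (zz1 p * cnj (zz1 v)) + Re (ww1 p * cnj (ww1 v))) * fst X
        + (Re (zz2 p * cnj (zz2 v)) + Re (ww2 p * cnj (ww2 v))) * snd X)) (at p)"
proof -
  have "((\<lambda>q. muI lam1 q X) has_derivative
     (\<lambda>v. ((1/2) * (2 * Re (zz1 p * cnj (zz1 v)) + 2 * Re (ww1 p * cnj (ww1 v))) + 0) * fst X
        + ((1/2) * (2 * Re (zz2 p * cnj (zz2 v)) + 2 * Re (ww2 p * cnj (ww2 v))) + 0) * snd X)) (at p)"
    unfolding muI_def
    by (intro has_derivative_add has_derivative_mult_left has_derivative_mult_right has_derivative_const cmod_sq_deriv bl_zz)
  then show ?thesis by (rule has_derivative_eq_rhs) (simp add: fun_eq_iff field_simps)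
qed

lemma muC_deriv:
  "((\<lambda>q. muC lamc q X) has_derivative
     (\<lambda>v. \<i> * (zz1 v * cnj (ww1 p) + zz1 p * cnj (ww1 v)) * of_real (fst X)
        + \<i> * (zz2 v * cnj (ww2 p) + zz2 p * cnj (ww2 v)) * of_real (snd X))) (at p)"
proof -
  have "((\<lambda>q. muC lamc q X) has_derivative
     (\<lambda>v. ((\<i> * zz1 p * cnj (ww1 v) + \<i> * zz1 v * cnj (ww1 p)) + 0) * of_real (fst X)
        + ((\<i> * zz2 p * cnj (ww2 v) + \<i> * zz2 v * cnj (ww2 p)) + 0) * of_real (snd X))) (at p)"
    unfolding muC_def
    by (intro has_derivative_add has_derivative_mult_left has_derivative_mult has_derivative_mult_right has_derivative_const has_derivative_cnj hd_zz)
  then show ?thesis by (simp add: algebra_simps)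
qed


lemma zz_ops[simp]:
  "zz1 (I_op p) = \<i> * zz1 p" "zz2 (I_op p) = \<i> * zz2 p" "ww1 (I_op p) = - \<i> * ww1 p" "ww2 (I_op p) = - \<i> * ww2 p"
  "zz1 (S_op p) = ww1 p" "zz2 (S_op p) = ww2 p" "ww1 (S_op p) = zz1 p" "ww2 (S_op p) = zz2 p"
  "zz1 (T_op p) = \<i> * ww1 p" "zz2 (T_op p) = \<i> * ww2 p" "ww1 (T_op p) = - \<i> * zz1 p" "ww2 (T_op p) = - \<i> * zz2 p"
  "zz1 (fund X p) = \<i> * of_real (fst X) * zz1 p" "zz2 (fund X p) = \<i> * of_real (snd X) * zz2 p"
  "ww1 (fund X p) = \<i> * of_real (fst X) * ww1 p" "ww2 (fund X p) = \<i> * of_real (snd X) * ww2 p"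
  "zz1 (a + b) = zz1 a + zz1 b" "zz2 (a + b) = zz2 a + zz2 b" "ww1 (a + b) = ww1 a + ww1 b" "ww2 (a + b) = ww2 a + ww2 b"
  "zz1 (a - b) = zz1 a - zz1 b" "zz2 (a - b) = zz2 a - zz2 b" "ww1 (a - b) = ww1 a - ww1 b" "ww2 (a - b) = ww2 a - ww2 b"
  "zz1 (- a) = - zz1 a" "zz2 (- a) = - zz2 a" "ww1 (- a) = - ww1 a" "ww2 (- a) = - ww2 a"
  "zz1 (x *\<^sub>R a) = of_real x * zz1 a" "zz2 (x *\<^sub>R a) = of_real x * zz2 a"
  "ww1 (x *\<^sub>R a) = of_real x * ww1 a" "ww2 (x *\<^sub>R a) = of_real x * ww2 a"
  "zz1 0 = 0" "zz2 0 = 0" "ww1 0 = 0" "ww2 0 = 0"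
  by (simp_all add: zz1_def zz2_def ww1_def ww2_def I_op_def S_op_def T_op_def fund_def scaleR_conv_of_real)

lemma pt_eq: "p = q \<longleftrightarrow> zz1 p = zz1 q \<and> zz2 p = zz2 q \<and> ww1 p = ww1 q \<and> ww2 p = ww2 q"
  by (cases p; cases q) (auto simp: zz1_def zz2_def ww1_def ww2_def)

lemma g_expand: "hs_g Y Z = Re (zz1 Y) * Re (zz1 Z) + Im (zz1 Y) * Im (zz1 Z)
   + Re (zz2 Y) * Re (zz2 Z) + Im (zz2 Y) * Im (zz2 Z)
   - Re (ww1 Y) * Re (ww1 Z) - Im (ww1 Y) * Im (ww1 Z)
   - Re (ww2 Y) * Re (ww2 Z) - Im (ww2 Y) * Im (ww2 Z)"
  by (simp add: hs_g_def)

lemma g_lin: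
  "hs_g Y (a + b) = hs_g Y a + hs_g Y b" "hs_g Y (a - b) = hs_g Y a - hs_g Y b"
  "hs_g Y (x *\<^sub>R a) = x * hs_g Y a" "hs_g Y (- a) = - hs_g Y a"
  "hs_g (a + b) Y = hs_g a Y + hs_g b Y" "hs_g (a - b) Y = hs_g a Y - hs_g b Y"
  "hs_g (x *\<^sub>R a) Y = x * hs_g a Y" "hs_g (- a) Y = - hs_g a Y"
  by (simp_all add: g_expand algebra_simps)

lemma g_sym: "hs_g Y Z = hs_g Z Y" by (simp add: g_expand algebra_simps)

lemma g_skew:
  "hs_g Y (I_op Z) = - hs_g (I_op Y) Z" "hs_g Y (S_op Z) = - hs_g (S_op Y) Z" "hs_g Y (T_op Z) = - hs_g (T_op Y) Z"
  by (simp_all add: g_expand algebra_simps)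

lemma op_lin:
  "I_op (a + b) = I_op a + I_op b" "S_op (a + b) = S_op a + S_op b" "T_op (a + b) = T_op a + T_op b"
  "I_op (a - b) = I_op a - I_op b" "S_op (a - b) = S_op a - S_op b" "T_op (a - b) = T_op a - T_op b"
  "I_op (x *\<^sub>R a) = x *\<^sub>R I_op a" "S_op (x *\<^sub>R a) = x *\<^sub>R S_op a" "T_op (x *\<^sub>R a) = x *\<^sub>R T_op a"
  by (simp_all add: pt_eq algebra_simps)

lemma op_comp:
  "I_op (I_op Y) = - Y" "S_op (S_op Y) = Y" "T_op (T_op Y) = Y"
  "I_op (S_op Y) = T_op Y" "I_op (T_op Y) = - S_op Y" "S_op (I_op Y) = - T_op Y"
  "S_op (T_op Y) = - I_op Y" "T_op (I_op Y) = S_op Y" "T_op (S_op Y) = I_op Y"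
  by (simp_all add: pt_eq algebra_simps)

lemma g_rel:
  "hs_g (I_op Y) (S_op Y) = 0" "hs_g (I_op Y) (T_op Y) = 0" "hs_g (S_op Y) (T_op Y) = 0"
  "hs_g (S_op Y) (I_op Y) = 0" "hs_g (T_op Y) (I_op Y) = 0" "hs_g (T_op Y) (S_op Y) = 0"
  "hs_g Y (I_op Y) = 0" "hs_g Y (S_op Y) = 0" "hs_g Y (T_op Y) = 0"
  "hs_g (I_op Y) (I_op Y) = hs_g Y Y" "hs_g (S_op Y) (S_op Y) = - hs_g Y Y" "hs_g (T_op Y) (T_op Y) = - hs_g Y Y"
  by (simp_all add: g_expand algebra_simps)

lemma g_nondeg: assumes "\<And>w. hs_g y w = 0" shows "y = 0"
proof -
  define w where "w = ((zz1 y, zz2 y), (- ww1 y, - ww2 y))"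
  have "hs_g y w = (cmod (zz1 y))\<^sup>2 + (cmod (zz2 y))\<^sup>2 + (cmod (ww1 y))\<^sup>2 + (cmod (ww2 y))\<^sup>2"
    by (simp add: g_expand w_def cmod_power2 power2_eq_square[symmetric])
  with assms have "(cmod (zz1 y))\<^sup>2 + (cmod (zz2 y))\<^sup>2 + (cmod (ww1 y))\<^sup>2 + (cmod (ww2 y))\<^sup>2 = 0" by simp
  moreover have "(cmod (zz1 y))\<^sup>2 \<ge> 0" "(cmod (zz2 y))\<^sup>2 \<ge> 0" "(cmod (ww1 y))\<^sup>2 \<ge> 0" "(cmod (ww2 y))\<^sup>2 \<ge> 0"
    by simp_all
  ultimately have "(cmod (zz1 y))\<^sup>2 = 0 \<and> (cmod (zz2 y))\<^sup>2 = 0 \<and> (cmod (ww1 y))\<^sup>2 = 0 \<and> (cmod (ww2 y))\<^sup>2 = 0"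
    by linarith
  hence "zz1 y = 0 \<and> zz2 y = 0 \<and> ww1 y = 0 \<and> ww2 y = 0" by simp
  thus ?thesis by (simp add: pt_eq)
qed


lemma fd_muI: "frechet_derivative (\<lambda>q. muI lam1 q X) (at p) = (\<lambda>v. - hs_g v (I_op (fund X p)))"
proof -
  have "(\<lambda>v. (Re (zz1 p * cnj (zz1 v)) + Re (ww1 p * cnj (ww1 v))) * fst X
        + (Re (zz2 p * cnj (zz2 v)) + Re (ww2 p * cnj (ww2 v))) * snd X) = (\<lambda>v. - hs_g v (I_op (fund X p)))"
    by (simp add: fun_eq_iff g_expand algebra_simps)
  moreover have "frechet_derivative (\<lambda>q. muI lam1 q X) (at p) = (\<lambda>v. (Re (zz1 p * cnj (zz1 v)) + Re (ww1 p * cnj (ww1 v))) * fst X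
        + (Re (zz2 p * cnj (zz2 v)) + Re (ww2 p * cnj (ww2 v))) * snd X)"
    by (rule frechet_derivative_at[OF muI_deriv, symmetric])
  ultimately show ?thesis by simp
qed

lemma fd_muC: "frechet_derivative (\<lambda>q. muC lamc q X) (at p)
   = (\<lambda>v. - Complex (hs_g v (S_op (fund X p))) (hs_g v (T_op (fund X p))))"
proof -
  have "(\<lambda>v. \<i> * (zz1 v * cnj (ww1 p) + zz1 p * cnj (ww1 v)) * of_real (fst X)
        + \<i> * (zz2 v * cnj (ww2 p) + zz2 p * cnj (ww2 v)) * of_real (snd X))
     = (\<lambda>v. - Complex (hs_g v (S_op (fund X p))) (hs_g v (T_op (fund X p))))"
    by (simp add: fun_eq_iff complex_eq_iff g_expand algebra_simps)
  moreover have "frechet_derivative (\<lambda>q. muC lamc q X) (at p) = (\<lambda>v. \<i> * (zz1 v * cnj (ww1 p) + zz1 p * cnj (ww1 v)) * of_real (fst X)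
        + \<i> * (zz2 v * cnj (ww2 p) + zz2 p * cnj (ww2 v)) * of_real (snd X))"
    by (rule frechet_derivative_at[OF muC_deriv, symmetric])
  ultimately show ?thesis by simp
qed

lemma fund_scale: "fund (x, - r * x) p = x *\<^sub>R fund (1, - r) p"
  by (simp add: pt_eq algebra_simps)

lemma nlie_iff: "X \<in> nlie (u1, 1) \<longleftrightarrow> X = (fst X, - real_of_int u1 * fst X)"
  by (cases X) (auto simp: nlie_def beta_def)

lemma level_tangent_eq:
  "level_tangent (u1, 1) lam1 lamc p =
    {v. hs_g v (I_op (fund (1, - real_of_int u1) p)) = 0 \<and> hs_g v (S_op (fund (1, - real_of_int u1) p)) = 0
        \<and> hs_g v (T_op (fund (1, - real_of_int u1) p)) = 0}" (is "?L = ?R")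
proof
  show "?L \<subseteq> ?R"
  proof
    fix v assume "v \<in> ?L"
    moreover have "(1, - real_of_int u1) \<in> nlie (u1, 1)" by (simp add: nlie_def beta_def)
    ultimately show "v \<in> ?R" unfolding level_tangent_def fd_muI fd_muC
      by (auto simp: complex_eq_iff)
  qed
next
  show "?R \<subseteq> ?L"
  proof
    fix v assume v: "v \<in> ?R"
    { fix X assume "X \<in> nlie (u1, 1)"
      hence "X = (fst X, - real_of_int u1 * fst X)" by (simp add: nlie_iff)
      hence "fund X p = fst X *\<^sub>R fund (1, - real_of_int u1) p" by (metis fund_scale)
      hence "hs_g v (I_op (fund X p)) = 0 \<and> hs_g v (S_op (fund X p)) = 0 \<and> hs_g v (T_op (fund X p)) = 0"
        using v by (simp add: op_lin g_lin) }
    thus "v \<in> ?L" unfolding level_tangent_def fd_muI fd_muC by (auto simp: complex_eq_iff)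
  qed
qed

lemma radical:
  assumes E: "hs_g e e \<noteq> 0" and A: "A \<in> {I_op, S_op, T_op}"
    and vL: "hs_g v (I_op e) = 0" "hs_g v (S_op e) = 0" "hs_g v (T_op e) = 0"
    and rad: "\<And>w. hs_g w (I_op e) = 0 \<Longrightarrow> hs_g w (S_op e) = 0 \<Longrightarrow> hs_g w (T_op e) = 0 \<Longrightarrow> omega A v w = 0"
  shows "v = (hs_g v e / hs_g e e) *\<^sub>R e"
proof -
  define E where "E = hs_g e e"
  define c where "c = hs_g v e / E"
  define P where "P w = w - (hs_g w (I_op e) / E) *\<^sub>R I_op e + (hs_g w (S_op e) / E) *\<^sub>R S_op e
     + (hs_g w (T_op e) / E) *\<^sub>R T_op e" for w
  have EE: "E \<noteq> 0" using E by (simp add: E_def)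
  have PL: "hs_g (P w) (I_op e) = 0 \<and> hs_g (P w) (S_op e) = 0 \<and> hs_g (P w) (T_op e) = 0" for w
    using EE by (simp add: P_def g_lin g_rel g_sym[of "I_op e" "S_op e"] g_sym[of "I_op e" "T_op e"]
        g_sym[of "S_op e" "T_op e"] E_def)
  have key: "hs_g v (A w) + (hs_g w (A e) / E) * hs_g v e = 0" for w
  proof -
    have "omega A v (P w) = 0" using rad PL by blast
    hence 0: "hs_g v (A (P w)) = 0" by (simp add: omega_def)
    have "hs_g v (A (P w)) = hs_g v (A w) + (hs_g w (A e) / E) * hs_g v e"
    proof -
      consider "A = I_op" | "A = S_op" | "A = T_op" using A by auto
      then show ?thesis
      proof cases
        case 1 then show ?thesis by (simp add: P_def op_lin op_comp g_lin vL g_sym[of v e])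
      next
        case 2 then show ?thesis by (simp add: P_def op_lin op_comp g_lin vL g_sym[of v e])
      next
        case 3 then show ?thesis by (simp add: P_def op_lin op_comp g_lin vL g_sym[of v e])
      qed
    qed
    with 0 show ?thesis by simp
  qed
  have AA: "A (A y) = y \<or> A (A y) = - y" for y using A by (auto simp: op_comp)
  have Askew: "hs_g y (A z) = - hs_g (A y) z" for y z using A by (auto simp: g_skew)
  have Alin: "A (c *\<^sub>R y) = c *\<^sub>R A y" for y using A by (auto simp: op_lin)
  have "A v - c *\<^sub>R A e = 0"
  proof (rule g_nondeg)
    fix w
    have "hs_g (A v - c *\<^sub>R A e) w = - hs_g v (A w) - c * hs_g (A e) w"
      by (simp add: g_lin Askew)
    also have "\<dots> = 0" using key[of w] by (simp add: c_def g_sym[of w "A e"] algebra_simps)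
    finally show "hs_g (A v - c *\<^sub>R A e) w = 0" .
  qed
  hence "A v = A (c *\<^sub>R e)" by (simp add: Alin)
  hence "A (A v) = A (A (c *\<^sub>R e))" by simp
  hence "v = c *\<^sub>R e" using A by (auto simp: op_comp)
  thus ?thesis by (simp add: c_def E_def)
qed


lemma cone_strict:
  assumes r: "r > 0" and h: "(a2, c2) \<in> interior (coneK1 r lam1 lamc)"
  shows "r * a2 - fst lam1 > cmod (of_real r * c2 - fst lamc)"
proof -
  obtain \<epsilon> where \<epsilon>: "\<epsilon> > 0" "ball (a2, c2) \<epsilon> \<subseteq> coneK1 r lam1 lamc" using h mem_interior by blast
  have "(a2 - \<epsilon>/2, c2) \<in> ball (a2, c2) \<epsilon>" using \<epsilon> by (simp add: dist_Pair_Pair dist_real_def)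
  hence "(a2 - \<epsilon>/2, c2) \<in> coneK1 r lam1 lamc" using \<epsilon> by blast
  hence "a2 - \<epsilon>/2 - fst lam1 / r \<ge> cmod (c2 - fst lamc / of_real r)" by (simp add: coneK1_def)
  hence lt: "cmod (c2 - fst lamc / of_real r) < a2 - fst lam1 / r" using \<epsilon> by linarith
  have "of_real r * c2 - fst lamc = of_real r * (c2 - fst lamc / of_real r)" using r by (simp add: field_simps)
  hence "cmod (of_real r * c2 - fst lamc) = r * cmod (c2 - fst lamc / of_real r)" using r by (simp add: norm_mult)
  also have "\<dots> < r * (a2 - fst lam1 / r)" using lt r by simp
  also have "\<dots> = r * a2 - fst lam1" using r by (simp add: field_simps)
  finally show ?thesis .
qed

lemma muI1: "muI lam1 p (1, - r) = (1/2)*((cmod (zz1 p))\<^sup>2+(cmod (ww1 p))\<^sup>2) + fst lam1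
   - r * ((1/2)*((cmod (zz2 p))\<^sup>2+(cmod (ww2 p))\<^sup>2) + snd lam1)"
  by (simp add: muI_def algebra_simps)

lemma muC1: "muC lamc p (1, - r) = \<i> * zz1 p * cnj (ww1 p) + fst lamc - of_real r * (\<i> * zz2 p * cnj (ww2 p) + snd lamc)"
  by (simp add: muC_def algebra_simps)

lemma mu_zero_iff: "p \<in> mu_zero (u1, 1) lam1 lamc \<longleftrightarrow>
   muI lam1 p (1, - real_of_int u1) = 0 \<and> muC lamc p (1, - real_of_int u1) = 0"
proof
  assume "p \<in> mu_zero (u1, 1) lam1 lamc"
  moreover have "(1, - real_of_int u1) \<in> nlie (u1, 1)" by (simp add: nlie_def beta_def)
  ultimately show "muI lam1 p (1, - real_of_int u1) = 0 \<and> muC lamc p (1, - real_of_int u1) = 0"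
    by (simp add: mu_zero_def)
next
  assume h: "muI lam1 p (1, - real_of_int u1) = 0 \<and> muC lamc p (1, - real_of_int u1) = 0"
  { fix X assume "X \<in> nlie (u1, 1)"
    hence X: "X = (fst X, - real_of_int u1 * fst X)" by (simp add: nlie_iff)
    have "muI lam1 p (fst X, - real_of_int u1 * fst X) = fst X * muI lam1 p (1, - real_of_int u1)"
      by (simp add: muI_def algebra_simps)
    moreover have "muC lamc p (fst X, - real_of_int u1 * fst X) = of_real (fst X) * muC lamc p (1, - real_of_int u1)"
      by (simp add: muC_def algebra_simps)
    ultimately have "muI lam1 p X = 0 \<and> muC lamc p X = 0" using h X by (metis mult_zero_right) }
  thus "p \<in> mu_zero (u1, 1) lam1 lamc" by (simp add: mu_zero_def)
qed

lemma pairS: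
  fixes z w :: complex and x1 x2 x3 :: real
  assumes e1: "- of_real x1 * z + \<i> * of_real x2 * w - of_real x3 * w = 0"
    and e2: "of_real x1 * w + \<i> * of_real x2 * z + of_real x3 * z = 0"
    and ne: "cmod z \<noteq> cmod w"
  shows "x1 = 0 \<and> x2 = 0 \<and> x3 = 0"
proof -
  define q where "q = \<i> * of_real x2 - of_real x3"
  define q' where "q' = - (\<i> * of_real x2 + of_real x3)"
  have "of_real x1 * z - q * w = - (- of_real x1 * z + \<i> * of_real x2 * w - of_real x3 * w)"
    by (simp add: q_def algebra_simps)
  hence "of_real x1 * z - q * w = 0" by (simp only: e1 minus_zero)
  hence a: "of_real x1 * z = q * w" by simp
  have "of_real x1 * w - q' * z = of_real x1 * w + \<i> * of_real x2 * z + of_real x3 * z"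
    by (simp add: q'_def algebra_simps)
  hence "of_real x1 * w - q' * z = 0" by (simp only: e2)
  hence b: "of_real x1 * w = q' * z" by simp
  have "(cmod q)\<^sup>2 = (cmod q')\<^sup>2" by (simp add: q_def q'_def cmod_power2)
  hence qq: "cmod q' = cmod q" by (simp add: power2_eq_iff_nonneg)
  have n1: "\<bar>x1\<bar> * cmod z = cmod q * cmod w" using arg_cong[OF a, of cmod] by (simp add: norm_mult)
  have n2: "\<bar>x1\<bar> * cmod w = cmod q * cmod z" using arg_cong[OF b, of cmod] qq by (simp add: norm_mult)
  have "(\<bar>x1\<bar> + cmod q) * (cmod z - cmod w) = 0" using n1 n2 by (simp add: algebra_simps)
  hence "\<bar>x1\<bar> + cmod q = 0" using ne by simp
  hence "x1 = 0" "q = 0" by (smt (verit) norm_ge_zero norm_eq_zero)+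
  thus ?thesis by (simp add: q_def complex_eq_iff)
qed

lemma comb_comp:
  fixes r x1 x2 x3 :: real and p :: pt
  defines "e \<equiv> fund (1, - r) p"
  defines "c \<equiv> I_op (x1 *\<^sub>R e) + S_op (x2 *\<^sub>R e) + T_op (x3 *\<^sub>R e)"
  shows "zz1 c = - of_real x1 * zz1 p + \<i> * of_real x2 * ww1 p - of_real x3 * ww1 p"
    "ww1 c = of_real x1 * ww1 p + \<i> * of_real x2 * zz1 p + of_real x3 * zz1 p"
    "zz2 c = - of_real r * (- of_real x1 * zz2 p + \<i> * of_real x2 * ww2 p - of_real x3 * ww2 p)"
    "ww2 c = - of_real r * (of_real x1 * ww2 p + \<i> * of_real x2 * zz2 p + of_real x3 * zz2 p)"
  by (simp_all add: e_def c_def algebra_simps)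

lemma E_formula: "hs_g (fund (1, - r) p) (fund (1, - r) p) =
   (cmod (zz1 p))\<^sup>2 - (cmod (ww1 p))\<^sup>2 + r\<^sup>2 * ((cmod (zz2 p))\<^sup>2 - (cmod (ww2 p))\<^sup>2)"
  unfolding g_expand cmod_power2 by (simp add: power2_eq_square algebra_simps)

lemma real_key:
  fixes a b c d al :: real
  assumes "a \<ge> 0" "b \<ge> 0" "c \<ge> 0" "d \<ge> 0" "al > 0"
    and I: "(a\<^sup>2 + b\<^sup>2) - (c\<^sup>2 + d\<^sup>2) = 2 * al"
    and E: "a\<^sup>2 - b\<^sup>2 = d\<^sup>2 - c\<^sup>2"
    and G: "al > a * b - c * d"
  shows False
proof -
  define P where "P = a\<^sup>2 + b\<^sup>2"
  define Q where "Q = c\<^sup>2 + d\<^sup>2"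
  have P2: "P\<^sup>2 = (a\<^sup>2 - b\<^sup>2)\<^sup>2 + 4 * (a*b)\<^sup>2" by (simp add: P_def power2_eq_square algebra_simps)
  have Q2: "Q\<^sup>2 = (d\<^sup>2 - c\<^sup>2)\<^sup>2 + 4 * (c*d)\<^sup>2" by (simp add: Q_def power2_eq_square algebra_simps)
  have EE: "(a\<^sup>2 - b\<^sup>2)\<^sup>2 = (d\<^sup>2 - c\<^sup>2)\<^sup>2" using E by simp
  have "(P - Q) * (P + Q) = P\<^sup>2 - Q\<^sup>2" by (simp add: power2_eq_square algebra_simps)
  also have "\<dots> = 4 * (a*b)\<^sup>2 - 4 * (c*d)\<^sup>2" using P2 Q2 EE by simp
  also have "\<dots> = 4 * (a*b - c*d) * (a*b + c*d)" by (simp add: power2_eq_square algebra_simps)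
  finally have PQ: "(P - Q) * (P + Q) = 4 * (a*b - c*d) * (a*b + c*d)" .
  have PQ2: "P - Q = 2 * al" using I by (simp add: P_def Q_def)
  have ge: "P + Q \<ge> 2 * (a*b + c*d)"
    using sum_squares_ge_zero[of "a - b" 0] sum_squares_ge_zero[of "c - d" 0]
    by (simp add: P_def Q_def power2_eq_square algebra_simps)
  have s0: "a*b + c*d \<ge> 0" using assms by simp
  show False
  proof (cases "a*b + c*d = 0")
    case True
    hence "(P - Q) * (P + Q) = 0" using PQ by simp
    moreover have "P + Q \<ge> 0" by (simp add: P_def Q_def)
    moreover have "P - Q > 0" using PQ2 assms by simp
    ultimately have "P + Q = 0" by simp
    thus False using PQ2 assms \<open>P + Q \<ge> 0\<close> by (simp add: P_def Q_def) (smt (verit) zero_le_power2)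
  next
    case False
    hence pos: "a*b + c*d > 0" using s0 by simp
    have "4 * (al * (a*b + c*d)) = 2 * al * (2 * (a*b + c*d))" by (simp only: mult_ac)
    also have "\<dots> \<le> 2 * al * (P + Q)" using ge assms by (intro mult_left_mono) simp_all
    also have "\<dots> = 4 * ((a*b - c*d) * (a*b + c*d))" using PQ PQ2 by (simp only: mult_ac)
    finally have "al * (a*b + c*d) \<le> (a*b - c*d) * (a*b + c*d)" by (rule mult_left_le_imp_le) simp
    hence "al \<le> a*b - c*d" using pos by (rule mult_right_le_imp_le)
    thus False using G by simp
  qed
qed




theorem mainTheorem18:
  fixes u1 :: int and lam1 :: "real \<times> real" and lamc :: "complex \<times> complex"
  assumes "u1 > 0"
    and "(snd lam1, snd lamc) \<in> interior (coneK1 (real_of_int u1) lam1 lamc)"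
  shows "N_acts_freely (u1, 1) lam1 lamc \<and> condS (u1, 1) lam1 lamc
         \<and> (induced_structure_nondeg (u1, 1) lam1 lamc \<longleftrightarrow> u1 = 1)"
proof -
  define r where "r = real_of_int u1"
  have r0: "r > 0" using assms(1) by (simp add: r_def)
  define \<alpha> where "\<alpha> = r * snd lam1 - fst lam1"
  define \<gamma> where "\<gamma> = of_real r * snd lamc - fst lamc"
  have cone: "cmod \<gamma> < \<alpha>" using cone_strict[OF r0 assms(2)[folded r_def]] by (simp add: \<alpha>_def \<gamma>_def)
  have al0: "\<alpha> > 0" using cone norm_ge_zero[of \<gamma>] by linarith
  have muz: "p \<in> mu_zero (u1,1) lam1 lamc \<longleftrightarrow>
     (1/2)*((cmod (zz1 p))\<^sup>2+(cmod (ww1 p))\<^sup>2) - r/2 * ((cmod (zz2 p))\<^sup>2+(cmod (ww2 p))\<^sup>2) = \<alpha>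
     \<and> \<i> * zz1 p * cnj (ww1 p) - of_real r * (\<i> * zz2 p * cnj (ww2 p)) = \<gamma>" for p
  proof -
    have 1: "muI lam1 p (1, - r) = 0 \<longleftrightarrow>
      (1/2)*((cmod (zz1 p))\<^sup>2+(cmod (ww1 p))\<^sup>2) - r/2 * ((cmod (zz2 p))\<^sup>2+(cmod (ww2 p))\<^sup>2) = \<alpha>"
      unfolding muI1 \<alpha>_def by (auto simp: algebra_simps)
    have 2: "muC lamc p (1, - r) = 0 \<longleftrightarrow>
      \<i> * zz1 p * cnj (ww1 p) - of_real r * (\<i> * zz2 p * cnj (ww2 p)) = \<gamma>"
    proof -
      have "muC lamc p (1, - r) = (\<i> * zz1 p * cnj (ww1 p) - of_real r * (\<i> * zz2 p * cnj (ww2 p))) - \<gamma>"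
        unfolding muC1 \<gamma>_def by (simp add: algebra_simps)
      thus ?thesis by simp
    qed
    show ?thesis using 1 2 mu_zero_iff[of p u1 lam1 lamc] by (simp add: r_def)
  qed
  have free: "N_acts_freely (u1, 1) lam1 lamc"
    unfolding N_acts_freely_def
  proof (intro ballI impI)
    fix p \<theta> assume p: "p \<in> mu_zero (u1, 1) lam1 lamc" and \<theta>: "\<theta> \<in> Ngrp (u1, 1)"
      and act: "torus_act \<theta> p = p"
    have nz: "zz1 p \<noteq> 0 \<or> ww1 p \<noteq> 0"
    proof (rule ccontr)
      assume "\<not> ?thesis" then have "zz1 p = 0" "ww1 p = 0" by auto
      with muz[of p] p have "- (r/2 * ((cmod (zz2 p))\<^sup>2+(cmod (ww2 p))\<^sup>2)) = \<alpha>" by simp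
      moreover have "r/2 * ((cmod (zz2 p))\<^sup>2+(cmod (ww2 p))\<^sup>2) \<ge> 0" using r0 by simp
      ultimately show False using al0 by linarith
    qed
    from act have a1: "cis (fst \<theta>) * zz1 p = zz1 p" and a2: "cis (fst \<theta>) * ww1 p = ww1 p"
      by (metis torus_act_def zz_simps)+
    have c1: "cis (fst \<theta>) = 1" using nz a1 a2 by (metis mult_cancel_right2)
    hence "cos (fst \<theta>) = 1" by (metis cis.sel(1) one_complex.sel(1))
    then obtain n :: int where n: "fst \<theta> = real_of_int n * 2 * pi" using cos_one_2pi_int by blast
    from \<theta> obtain m :: int where m: "of_int u1 * fst \<theta> + of_int 1 * snd \<theta> = 2 * pi * of_int m"
      by (auto simp: Ngrp_def)
    hence "snd \<theta> = 2 * pi * of_int (m - u1 * n)" using n by (simp add: algebra_simps)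
    moreover have "fst \<theta> = 2 * pi * of_int n" using n by simp
    ultimately show "torus_identity \<theta>" unfolding torus_identity_def by blast
  qed
  have neq: "cmod (zz1 p) \<noteq> cmod (ww1 p) \<or> cmod (zz2 p) \<noteq> cmod (ww2 p)"
    if p: "p \<in> mu_zero (u1, 1) lam1 lamc" for p
  proof (rule ccontr)
    assume "\<not> ?thesis"
    hence e1: "cmod (zz1 p) = cmod (ww1 p)" and e2: "cmod (zz2 p) = cmod (ww2 p)" by auto
    from muz[of p] p have I: "(1/2)*((cmod (zz1 p))\<^sup>2+(cmod (ww1 p))\<^sup>2) - r/2 * ((cmod (zz2 p))\<^sup>2+(cmod (ww2 p))\<^sup>2) = \<alpha>"
      and C: "\<i> * zz1 p * cnj (ww1 p) - of_real r * (\<i> * zz2 p * cnj (ww2 p)) = \<gamma>" by auto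
    have "\<gamma> = \<i> * (zz1 p * cnj (ww1 p) - of_real r * (zz2 p * cnj (ww2 p)))" using C by (simp add: algebra_simps)
    hence "cmod \<gamma> = cmod (zz1 p * cnj (ww1 p) - of_real r * (zz2 p * cnj (ww2 p)))" by (simp add: norm_mult)
    also have "\<dots> \<ge> cmod (zz1 p * cnj (ww1 p)) - cmod (of_real r * (zz2 p * cnj (ww2 p)))"
      by (rule norm_triangle_ineq2)
    finally have "cmod \<gamma> \<ge> cmod (zz1 p) * cmod (ww1 p) - r * (cmod (zz2 p) * cmod (ww2 p))"
      using r0 by (simp add: norm_mult)
    moreover have "\<alpha> = cmod (zz1 p) * cmod (ww1 p) - r * (cmod (zz2 p) * cmod (ww2 p))"
      using I e1 e2 by (simp add: power2_eq_square algebra_simps)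
    ultimately show False using cone by linarith
  qed
  have condS: "condS (u1, 1) lam1 lamc"
    unfolding condS_def
  proof (intro ballI impI)
    fix p X1 X2 X3 assume p: "p \<in> mu_zero (u1, 1) lam1 lamc"
      and X: "X1 \<in> nlie (u1, 1)" "X2 \<in> nlie (u1, 1)" "X3 \<in> nlie (u1, 1)"
      and comb: "I_op (fund X1 p) + S_op (fund X2 p) + T_op (fund X3 p) = 0"
    define e where "e = fund (1, - r) p"
    have f: "fund Xk p = fst Xk *\<^sub>R e" if "Xk \<in> nlie (u1, 1)" for Xk
    proof -
      have "Xk = (fst Xk, - r * fst Xk)" using that nlie_iff r_def by blast
      hence "fund Xk p = fund (fst Xk, - r * fst Xk) p" by simp
      thus ?thesis by (simp add: pt_eq e_def algebra_simps)
    qed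
    have c0: "I_op (fst X1 *\<^sub>R e) + S_op (fst X2 *\<^sub>R e) + T_op (fst X3 *\<^sub>R e) = 0"
      using comb f X by simp
    note cc = comb_comp[of "fst X1" r p "fst X2" "fst X3", folded e_def, unfolded c0]
    have rr: "(of_real r :: complex) \<noteq> 0" using r0 by simp
    have x0: "fst X1 = 0 \<and> fst X2 = 0 \<and> fst X3 = 0"
    proof (cases "cmod (zz1 p) \<noteq> cmod (ww1 p)")
      case True
      show ?thesis by (rule pairS[OF _ _ True]) (use cc in simp_all)
    next
      case False
      hence ne: "cmod (zz2 p) \<noteq> cmod (ww2 p)" using neq[OF p] by simp
      show ?thesis by (rule pairS[OF _ _ ne]) (use cc rr in simp_all)
    qed
    have "Xk = 0" if "Xk \<in> nlie (u1, 1)" "fst Xk = 0" for Xk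
    proof -
      have "Xk = (fst Xk, - r * fst Xk)" using that nlie_iff r_def by blast
      thus ?thesis using that by (simp add: prod_eq_iff)
    qed
    thus "X1 = 0 \<and> X2 = 0 \<and> X3 = 0" using x0 X by blast
  qed
  have gam: "cmod \<gamma> \<ge> cmod (zz1 p) * cmod (ww1 p) - r * (cmod (zz2 p) * cmod (ww2 p))"
    if p: "p \<in> mu_zero (u1, 1) lam1 lamc" for p
  proof -
    from muz[of p] p have C: "\<i> * zz1 p * cnj (ww1 p) - of_real r * (\<i> * zz2 p * cnj (ww2 p)) = \<gamma>" by auto
    have "\<gamma> = \<i> * (zz1 p * cnj (ww1 p) - of_real r * (zz2 p * cnj (ww2 p)))" using C by (simp add: algebra_simps)
    hence "cmod \<gamma> = cmod (zz1 p * cnj (ww1 p) - of_real r * (zz2 p * cnj (ww2 p)))" by (simp add: norm_mult)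
    also have "\<dots> \<ge> cmod (zz1 p * cnj (ww1 p)) - cmod (of_real r * (zz2 p * cnj (ww2 p)))"
      by (rule norm_triangle_ineq2)
    finally show ?thesis using r0 by (simp add: norm_mult)
  qed
  have LT: "level_tangent (u1,1) lam1 lamc p = {v. hs_g v (I_op (fund (1, - r) p)) = 0
        \<and> hs_g v (S_op (fund (1, - r) p)) = 0 \<and> hs_g v (T_op (fund (1, - r) p)) = 0}" for p
    using level_tangent_eq[of u1 lam1 lamc p] by (simp add: r_def)
  show ?thesis
  proof (intro conjI free condS iffI)
    assume u: "u1 = 1"
    hence r1: "r = 1" by (simp add: r_def)
    show "induced_structure_nondeg (u1, 1) lam1 lamc"
      unfolding induced_structure_nondeg_def induced_nondeg_at_def
    proof (intro ballI impI)
      fix A p v assume A: "A \<in> {I_op, S_op, T_op}" and p: "p \<in> mu_zero (u1, 1) lam1 lamc"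
        and v: "v \<in> level_tangent (u1, 1) lam1 lamc p"
        and rad: "\<forall>w\<in>level_tangent (u1, 1) lam1 lamc p. omega A v w = 0"
      define e where "e = fund (1, - r) p"
      have E: "hs_g e e \<noteq> 0"
      proof
        assume E0: "hs_g e e = 0"
        from muz[of p] p have I: "(1/2)*((cmod (zz1 p))\<^sup>2+(cmod (ww1 p))\<^sup>2) - r/2 * ((cmod (zz2 p))\<^sup>2+(cmod (ww2 p))\<^sup>2) = \<alpha>"
          by auto
        show False
        proof (rule real_key[of "cmod (zz1 p)" "cmod (ww1 p)" "cmod (zz2 p)" "cmod (ww2 p)" \<alpha>])
          show "((cmod (zz1 p))\<^sup>2 + (cmod (ww1 p))\<^sup>2) - ((cmod (zz2 p))\<^sup>2 + (cmod (ww2 p))\<^sup>2) = 2 * \<alpha>"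
            using I r1 by (simp add: field_simps)
          show "(cmod (zz1 p))\<^sup>2 - (cmod (ww1 p))\<^sup>2 = (cmod (ww2 p))\<^sup>2 - (cmod (zz2 p))\<^sup>2"
            using E0 E_formula[of r p] r1 by (simp add: e_def)
          show "\<alpha> > cmod (zz1 p) * cmod (ww1 p) - cmod (zz2 p) * cmod (ww2 p)"
            using gam[OF p] cone r1 by simp
        qed (use al0 in simp_all)
      qed
      have "v = (hs_g v e / hs_g e e) *\<^sub>R e"
        by (rule radical[OF E A]) (use v rad LT[of p] in \<open>auto simp: e_def\<close>)
      also have "\<dots> = fund (hs_g v e / hs_g e e, - r * (hs_g v e / hs_g e e)) p"
        by (simp add: pt_eq e_def algebra_simps)
      finally have "v = fund (hs_g v e / hs_g e e, - r * (hs_g v e / hs_g e e)) p" .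
      moreover have "(hs_g v e / hs_g e e, - r * (hs_g v e / hs_g e e)) \<in> nlie (u1, 1)"
        by (simp add: nlie_def beta_def r_def)
      ultimately show "\<exists>X\<in>nlie (u1, 1). v = fund X p" by blast
    qed
  next
    assume nd: "induced_structure_nondeg (u1, 1) lam1 lamc"
    show "u1 = 1"
    proof (rule ccontr)
      assume "u1 \<noteq> 1"
      hence "u1 \<ge> 2" using assms(1) by simp
      hence r2: "r \<ge> 2" by (simp add: r_def)
      define g0 where "g0 = cmod \<gamma>"
      define DD where "DD = (r^4 - r^2) / 4"
      have "r^2 \<ge> 4" using r2 by (metis numeral_Bit0_eq_double power2_eq_square mult_mono
            order.trans[OF _ r2] zero_le_numeral mult_2 power2_le_iff_abs_le) 
      hence r4: "r^2 * r^2 \<ge> 4 * r^2" by (intro mult_right_mono) simp_all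
      have r4': "r^4 = r^2 * r^2" by (simp add: power4_eq_xxxx power2_eq_square)
      have "r^2 > 0" using r0 by simp
      moreover have "r^4 \<ge> 4 * r^2" using r4 by (simp only: r4')
      ultimately have "r^4 - r^2 > 0" by linarith
      hence DD0: "DD > 0" unfolding DD_def by simp
      define b where "b = \<alpha> * r"
      define c0 where "c0 = \<alpha>^2 - g0^2"
      have g00: "g0 \<ge> 0" by (simp add: g0_def)
      have c00: "c0 > 0" using cone g00 unfolding c0_def g0_def
        by (simp add: power_strict_mono)
      have b0: "b > 0" using al0 r0 by (simp add: b_def)
      define R where "R = sqrt (b^2 + 4*DD*c0)"
      have R0: "R \<ge> 0" using DD0 c00 by (simp add: R_def)
      have R2: "R^2 = b^2 + 4*DD*c0" using DD0 c00 by (simp add: R_def)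
      define sv where "sv = (b + R) / (2*DD)"
      have sv0: "sv > 0" using b0 R0 DD0 by (simp add: sv_def)
      have "DD * sv^2 - b * sv = (R^2 - b^2) / (4*DD)" unfolding sv_def using DD0
        by (simp add: field_simps power2_eq_square)
      hence sq: "DD * sv^2 - b * sv = c0" using R2 DD0 by simp
      define X where "X = \<alpha> + (r + r^2)* sv/2"
      define Y where "Y = \<alpha> + (r - r^2)* sv/2"
      have "r + r^2 > 0" using r0 by (simp add: add_pos_nonneg)
      hence "(r + r^2) * sv > 0" using sv0 by (rule mult_pos_pos)
      hence X0: "X > 0" using al0 unfolding X_def by simp
      have "X * Y = \<alpha>^2 + b * sv - DD* sv^2"
        by (simp add: X_def Y_def b_def DD_def power2_eq_square power4_eq_xxxx field_simps)
      hence XY: "X * Y = g0^2" using sq by (simp add: c0_def)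
      define z1 where "z1 = complex_of_real (sqrt X)"
      define w1 where "w1 = \<i> * cnj \<gamma> / complex_of_real (sqrt X)"
      define w2 where "w2 = complex_of_real (sqrt sv)"
      define p :: pt where "p = ((z1, 0), (w1, w2))"
      have sX: "sqrt X > 0" using X0 by simp
      have cz1: "(cmod (zz1 p))\<^sup>2 = X" using X0 by (simp add: p_def z1_def)
      have cw1: "(cmod (ww1 p))\<^sup>2 = Y"
      proof -
        have "(cmod (ww1 p))\<^sup>2 = g0^2 / X" using X0 by (simp add: p_def w1_def g0_def norm_divide norm_mult power_divide)
        also have "\<dots> = Y" using XY X0 by (simp add: field_simps)
        finally show ?thesis .
      qed
      have cw2: "(cmod (ww2 p))\<^sup>2 = sv" using sv0 by (simp add: p_def w2_def)
      have cz2: "zz2 p = 0" by (simp add: p_def)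
      have pm: "p \<in> mu_zero (u1, 1) lam1 lamc"
      proof -
        have "(1/2)*((cmod (zz1 p))\<^sup>2+(cmod (ww1 p))\<^sup>2) - r/2 * ((cmod (zz2 p))\<^sup>2+(cmod (ww2 p))\<^sup>2) = \<alpha>"
          unfolding cz1 cw1 cw2 cz2 by (simp add: X_def Y_def field_simps)
        moreover have "\<i> * zz1 p * cnj (ww1 p) - of_real r * (\<i> * zz2 p * cnj (ww2 p)) = \<gamma>"
          using sX by (simp add: p_def z1_def w1_def field_simps)
        ultimately show ?thesis using muz by blast
      qed
      define e where "e = fund (1, - r) p"
      have E0: "hs_g e e = 0"
        using E_formula[of r p] cz1 cw1 cw2 cz2 unfolding e_def by (simp add: X_def Y_def field_simps power2_eq_square)
      define v where "v = S_op e"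
      have vL: "v \<in> level_tangent (u1, 1) lam1 lamc p"
        unfolding LT v_def using E0 by (simp add: g_rel e_def[symmetric])
      have vrad: "\<forall>w\<in>level_tangent (u1, 1) lam1 lamc p. omega I_op v w = 0"
      proof
        fix w assume "w \<in> level_tangent (u1, 1) lam1 lamc p"
        hence w: "hs_g w (T_op e) = 0" unfolding LT e_def by simp
        have "omega I_op v w = hs_g (S_op e) (I_op w)" by (simp add: omega_def v_def)
        also have "\<dots> = - hs_g (I_op (S_op e)) w" by (rule g_skew(1))
        also have "\<dots> = - hs_g w (T_op e)" by (simp add: op_comp g_sym[of "T_op e"])
        finally show "omega I_op v w = 0" using w by simp
      qed
      have notf: "\<not> (\<exists>X\<in>nlie (u1, 1). v = fund X p)"
      proof
        assume "\<exists>X\<in>nlie (u1, 1). v = fund X p"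
        then obtain X where "v = fund X p" by blast
        hence "zz2 v = zz2 (fund X p)" by simp
        moreover have "zz2 (fund X p) = 0" using cz2 by simp
        moreover have "zz2 v \<noteq> 0" using r0 sv0 by (simp add: v_def e_def p_def w2_def)
        ultimately show False by simp
      qed
      have "induced_nondeg_at (u1, 1) lam1 lamc I_op p" using nd pm unfolding induced_structure_nondeg_def by blast
      thus False using vL vrad notf unfolding induced_nondeg_at_def by blast
    qed
  qed
qed


end
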